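(* Let $(\mathcal M,g)$ be an oriented three-dimensional Riemannian or Lorentzian manifold satisfying the topological massive gravity equations $\Phi_{ab}=\frac1m( *A)_{ab}$, $R=6\Lambda$ ($m\neq0$, $\Lambda$ constants), and let $\mathcal N$ be a null structure with generator $k^a$. (1) If $k_{[a}\Phi_{b]c}k^c=0$, then $k^ak^b\left(A_{abc}+3g_{bc}\nabla_aS\right)=0$. (2) If $\Phi_{ab}k^b=0$, then $k^a\left(A_{abc}-2g_{a[b}\nabla_{c]}S\right)=0$, $k^ak^bA_{abc}=0$, $k^a\nabla_aS=0$. (3) If $k_{[a}\Phi_{b]c}=0$, then $k^c\left(A_{abc}-g_{ca}\nabla_bS\right)=0$, $k^aA_{abc}=0$, $k_{[a}\nabla_{b]}S=0$.
   Context: Abstract index notation; $\nabla$ the Levi-Civita connection; brackets denote (skew-)symmetrisation with weight $1/2$. $R_{abd}{}^cV^d=2\nabla_{[a}\nabla_{b]}V^c$, $R_{ab}=R_{acb}{}^c$, $R=R_a{}^a$, $\Phi_{ab}=R_{ab}-\frac13Rg_{ab}$, $S=\frac1{12}R$, Cotton tensor $A_{abc}=-2\nabla_{[b}\Phi_{c]a}+2g_{a[b}\nabla_{c]}S$. The orientation is a volume form $e_{abc}$ normalised by $e_{abc}e^{abc}=(-1)^q6$, $q$ the number of negative eigenvalues of $g$; $( *A)_{ab}=\frac12e_b{}^{cd}A_{acd}$ (a symmetric tracefree tensor). $g,\nabla$ extended complex-(bi)linearly to $T^{\mathbb C}\mathcal M$. A null structure is a complex line subbundle $\mathcal N\subset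 T^{\mathbb C}\mathcal M$ with $g(k,k)=0$ for all sections; a generator is a nowhere-vanishing section. *)

theory Defs
  imports "HOL-Analysis.Analysis" "HOL-Library.Numeral_Type" "HOL-Computational_Algebra.Polynomial"
begin

text \<open>Local coordinate model: the manifold is modelled by an open coordinate domain
U of real^3, tensors are given by their components (indices of type 3).\<close>

definition pd :: "(real^3 \<Rightarrow> 'b::real_normed_vector) \<Rightarrow> 3 \<Rightarrow> real^3 \<Rightarrow> 'b" where
  "pd f i x = frechet_derivative f (at x) (axis i 1)"

fun ipd :: "3 list \<Rightarrow> (real^3 \<Rightarrow> 'b::real_normed_vector) \<Rightarrow> real^3 \<Rightarrow> 'b" where
  "ipd [] f = f"
| "ipd (i # is) f = pd (ipd is f) i"

definition smooth_on :: "(real^3) set \<Rightarrow> (real^3 \<Rightarrow> 'b::real_normed_vector) \<Rightarrow> bool" where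
  "smooth_on U f \<longleftrightarrow> (\<forall>is. \<forall>x\<in>U. ipd is f differentiable (at x))"

type_synonym metric = "real^3 \<Rightarrow> real^3^3"

definition ginv :: "metric \<Rightarrow> real^3 \<Rightarrow> 3 \<Rightarrow> 3 \<Rightarrow> real" where
  "ginv g x a b = matrix_inv (g x) $ a $ b"

definition christ :: "metric \<Rightarrow> 3 \<Rightarrow> 3 \<Rightarrow> 3 \<Rightarrow> real^3 \<Rightarrow> real" where
  "christ g c a b x = (1/2) * (\<Sum>d\<in>UNIV. ginv g x c d *
      (pd (\<lambda>y. g y $ b $ d) a x + pd (\<lambda>y. g y $ a $ d) b x - pd (\<lambda>y. g y $ a $ b) d x))"

text \<open>Riemann tensor R_{abd}^c with R_{abd}^c V^d = 2 nabla_[a nabla_b] V^c.\<close>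
definition riem :: "metric \<Rightarrow> 3 \<Rightarrow> 3 \<Rightarrow> 3 \<Rightarrow> 3 \<Rightarrow> real^3 \<Rightarrow> real" where
  "riem g a b d c x = pd (christ g c b d) a x - pd (christ g c a d) b x
     + (\<Sum>e\<in>UNIV. christ g c a e x * christ g e b d x - christ g c b e x * christ g e a d x)"

definition ric :: "metric \<Rightarrow> 3 \<Rightarrow> 3 \<Rightarrow> real^3 \<Rightarrow> real" where
  "ric g a b x = (\<Sum>c\<in>UNIV. riem g a c b c x)"

definition scal :: "metric \<Rightarrow> real^3 \<Rightarrow> real" where
  "scal g x = (\<Sum>a\<in>UNIV. \<Sum>b\<in>UNIV. ginv g x a b * ric g a b x)"

definition phi :: "metric \<Rightarrow> 3 \<Rightarrow> 3 \<Rightarrow> real^3 \<Rightarrow> real" where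
  "phi g a b x = ric g a b x - (1/3) * scal g x * g x $ a $ b"

definition schS :: "metric \<Rightarrow> real^3 \<Rightarrow> real" where
  "schS g x = scal g x / 12"

definition covd2 :: "metric \<Rightarrow> (3 \<Rightarrow> 3 \<Rightarrow> real^3 \<Rightarrow> real) \<Rightarrow> 3 \<Rightarrow> 3 \<Rightarrow> 3 \<Rightarrow> real^3 \<Rightarrow> real" where
  "covd2 g T c a b x = pd (T a b) c x
     - (\<Sum>d\<in>UNIV. christ g d c a x * T d b x) - (\<Sum>d\<in>UNIV. christ g d c b x * T a d x)"

definition cotton :: "metric \<Rightarrow> 3 \<Rightarrow> 3 \<Rightarrow> 3 \<Rightarrow> real^3 \<Rightarrow> real" where
  "cotton g a b c x = - (covd2 g (phi g) b c a x - covd2 g (phi g) c b a x)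
     + (g x $ a $ b * pd (schS g) c x - g x $ a $ c * pd (schS g) b x)"

definition hodge_cotton :: "metric \<Rightarrow> (real^3 \<Rightarrow> 3 \<Rightarrow> 3 \<Rightarrow> 3 \<Rightarrow> real) \<Rightarrow> 3 \<Rightarrow> 3 \<Rightarrow> real^3 \<Rightarrow> real" where
  "hodge_cotton g e a b x = (1/2) * (\<Sum>c\<in>UNIV. \<Sum>d\<in>UNIV.
      (\<Sum>c'\<in>UNIV. \<Sum>d'\<in>UNIV. ginv g x c c' * ginv g x d d' * e x b c' d') * cotton g a c d x)"

definition charpoly3 :: "real^3^3 \<Rightarrow> real poly" where
  "charpoly3 G = det (\<chi> i j. (if i = j then [:0, 1:] else 0) - [: G $ i $ j :])"

definition neg_eigs :: "real^3^3 \<Rightarrow> nat" where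
  "neg_eigs G = (\<Sum>l\<in>{l. l < 0 \<and> poly (charpoly3 G) l = 0}. order l (charpoly3 G))"

text \<open>Smooth Riemannian (q = 0) or Lorentzian (q = 1 or 2) metric on U.\<close>
definition riem_or_lor_metric :: "(real^3) set \<Rightarrow> metric \<Rightarrow> bool" where
  "riem_or_lor_metric U g \<longleftrightarrow> open U \<and>
     (\<forall>a b. smooth_on U (\<lambda>x. g x $ a $ b)) \<and>
     (\<forall>x\<in>U. transpose (g x) = g x \<and> det (g x) \<noteq> 0 \<and> neg_eigs (g x) \<in> {0, 1, 2})"

definition orientation :: "(real^3) set \<Rightarrow> metric \<Rightarrow> (real^3 \<Rightarrow> 3 \<Rightarrow> 3 \<Rightarrow> 3 \<Rightarrow> real) \<Rightarrow> bool" where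
  "orientation U g e \<longleftrightarrow>
     (\<forall>a b c. continuous_on U (\<lambda>x. e x a b c)) \<and>
     (\<forall>x\<in>U. (\<forall>a b c. e x b a c = - e x a b c \<and> e x a c b = - e x a b c) \<and>
        (\<Sum>a\<in>UNIV. \<Sum>b\<in>UNIV. \<Sum>c\<in>UNIV. \<Sum>a'\<in>UNIV. \<Sum>b'\<in>UNIV. \<Sum>c'\<in>UNIV.
            ginv g x a a' * ginv g x b b' * ginv g x c c' * e x a b c * e x a' b' c')
          = (-1) ^ neg_eigs (g x) * 6)"

text \<open>Complex-bilinear extension: g(k,l) and k_a = g_{ab} k^b.\<close>
definition gC :: "metric \<Rightarrow> real^3 \<Rightarrow> 3 \<Rightarrow> 3 \<Rightarrow> complex" where
  "gC g x a b = complex_of_real (g x $ a $ b)"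

definition lower :: "metric \<Rightarrow> (real^3 \<Rightarrow> complex^3) \<Rightarrow> 3 \<Rightarrow> real^3 \<Rightarrow> complex" where
  "lower g k a x = (\<Sum>b\<in>UNIV. gC g x a b * k x $ b)"

definition null_generator :: "(real^3) set \<Rightarrow> metric \<Rightarrow> (real^3 \<Rightarrow> complex^3) \<Rightarrow> bool" where
  "null_generator U g k \<longleftrightarrow> (\<forall>a. smooth_on U (\<lambda>x. k x $ a)) \<and>
     (\<forall>x\<in>U. k x \<noteq> 0 \<and> (\<Sum>a\<in>UNIV. \<Sum>b\<in>UNIV. gC g x a b * k x $ a * k x $ b) = 0)"

end

theory Submission
  imports Defs
begin



lemma pd_cong:
  assumes "open U" "x \<in> U" "\<And>y. y \<in> U \<Longrightarrow> f y = h y"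
  shows "pd f i x = pd h i x"
proof -
  have "\<And>f'. (f has_derivative f') (at x) \<longleftrightarrow> (h has_derivative f') (at x)"
    using assms has_derivative_transform_within_open[of f _ x UNIV U h]
      has_derivative_transform_within_open[of h _ x UNIV U f] by auto
  hence "frechet_derivative f (at x) = frechet_derivative h (at x)"
    unfolding frechet_derivative_def by simp
  thus ?thesis unfolding pd_def by simp
qed

lemma diff_cong:
  assumes "open U" "x \<in> U" "\<And>y. y \<in> U \<Longrightarrow> f y = h y" "f differentiable (at x)"
  shows "h differentiable (at x)"
  using assms has_derivative_transform_within_open[of f _ x UNIV U h] unfolding differentiable_def by blast

lemma pd_has:
  assumes "(f has_derivative f') (at x)"
  shows "pd f i x = f' (axis i 1)"
  using assms frechet_derivative_at unfolding pd_def by metis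

lemma has_pd:
  assumes "f differentiable (at x)"
  shows "(f has_derivative frechet_derivative f (at x)) (at x)"
  using assms frechet_derivative_works by blast

lemma pd_const: "pd (\<lambda>y. c) i x = 0"
  unfolding pd_def by simp

lemma dir_deriv:
  fixes h :: "real^3 \<Rightarrow> real"
  assumes "h differentiable (at (y + t *\<^sub>R w))"
  shows "((\<lambda>t. h (y + t *\<^sub>R w)) has_real_derivative frechet_derivative h (at (y + t *\<^sub>R w)) w) (at t)"
proof -
  let ?h' = "frechet_derivative h (at (y + t *\<^sub>R w))"
  have 1: "((\<lambda>t. y + t *\<^sub>R w) has_derivative (\<lambda>s. s *\<^sub>R w)) (at t)"
    by (auto intro!: derivative_eq_intros)
  have 2: "(h has_derivative ?h') (at (y + t *\<^sub>R w))" using assms has_pd by blast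
  have "((\<lambda>t. h (y + t *\<^sub>R w)) has_derivative (\<lambda>s. ?h' (s *\<^sub>R w))) (at t)"
    using diff_chain_at[OF 1 2] by (simp add: o_def)
  moreover have "linear ?h'" using assms linear_frechet_derivative by blast
  ultimately have "((\<lambda>t. h (y + t *\<^sub>R w)) has_derivative (\<lambda>s. s * ?h' w)) (at t)"
    by (simp add: linear_scale)
  moreover have "(\<lambda>s. s * ?h' w) = (*) (?h' w)" by (auto simp: fun_eq_iff)
  ultimately show ?thesis unfolding has_field_derivative_def by simp
qed


lemma deriv_line:
  fixes f :: "real^3 \<Rightarrow> real"
  assumes "f differentiable (at (y + t *\<^sub>R axis a 1))"
  shows "((\<lambda>t. f (y + t *\<^sub>R axis a 1)) has_real_derivative pd f a (y + t *\<^sub>R axis a 1)) (at t)"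
  using dir_deriv[OF assms] unfolding pd_def .

lemma mvt_line:
  fixes f :: "real^3 \<Rightarrow> real"
  assumes h: "h > 0" and d: "\<And>t. 0 \<le> t \<Longrightarrow> t \<le> h \<Longrightarrow> f differentiable (at (y + t *\<^sub>R axis a 1))"
  shows "\<exists>z. 0 < z \<and> z < h \<and> f (y + h *\<^sub>R axis a 1) - f y = h * pd f a (y + z *\<^sub>R axis a 1)"
proof -
  let ?F = "\<lambda>t. f (y + t *\<^sub>R axis a 1)"
  have D: "\<And>t. 0 \<le> t \<Longrightarrow> t \<le> h \<Longrightarrow> (?F has_real_derivative pd f a (y + t *\<^sub>R axis a 1)) (at t)"
    using d deriv_line by blast
  have "continuous_on {0..h} ?F"
    using D by (meson DERIV_isCont atLeastAtMost_iff continuous_at_imp_continuous_on)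
  moreover have "\<And>t. 0 < t \<Longrightarrow> t < h \<Longrightarrow> ?F differentiable (at t)"
    using D real_differentiable_def by (meson less_eq_real_def)
  ultimately obtain l z where z: "0 < z" "z < h" "DERIV ?F z :> l" "?F h - ?F 0 = (h - 0) * l"
    using MVT[OF h, of ?F] by auto
  have "l = pd f a (y + z *\<^sub>R axis a 1)" using D[of z] z DERIV_unique by force
  thus ?thesis using z by auto
qed

lemma mvt2:
  fixes f :: "real^3 \<Rightarrow> real"
  assumes d0: "\<forall>y\<in>U. f differentiable (at y)" and d1: "\<forall>y\<in>U. pd f a differentiable (at y)"
    and h: "h > 0"
    and inU: "\<And>t s. 0 \<le> t \<Longrightarrow> t \<le> h \<Longrightarrow> 0 \<le> s \<Longrightarrow> s \<le> h \<Longrightarrow> x + t *\<^sub>R axis a 1 + s *\<^sub>R axis b 1 \<in> U"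
  shows "\<exists>p. norm (p - x) \<le> 2*h \<and>
     f (x + h *\<^sub>R axis a 1 + h *\<^sub>R axis b 1) - f (x + h *\<^sub>R axis a 1) - f (x + h *\<^sub>R axis b 1) + f x
       = h * h * pd (pd f a) b p"
proof -
  define u :: "real^3" where "u = axis a 1"
  define v :: "real^3" where "v = axis b 1"
  let ?P = "\<lambda>y. pd f a (y + h *\<^sub>R v) - pd f a y"
  define \<phi> where "\<phi> = (\<lambda>t. f ((x + h *\<^sub>R v) + t *\<^sub>R u) - f (x + t *\<^sub>R u))"
  have D: "(\<phi> has_real_derivative pd f a ((x + h *\<^sub>R v) + t *\<^sub>R u) - pd f a (x + t *\<^sub>R u)) (at t)"
    if "0 \<le> t" "t \<le> h" for t
  proof -
    have "(x + h *\<^sub>R v) + t *\<^sub>R u \<in> U" using inU[of t h] that h unfolding u_def v_def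
      by (simp add: add_ac)
    moreover have "x + t *\<^sub>R u \<in> U" using inU[of t 0] that h unfolding u_def v_def by simp
    ultimately show ?thesis unfolding \<phi>_def u_def
      using d0 by (intro DERIV_diff deriv_line) auto
  qed
  have "continuous_on {0..h} \<phi>"
    using D by (meson DERIV_isCont atLeastAtMost_iff continuous_at_imp_continuous_on)
  moreover have "\<And>t. 0 < t \<Longrightarrow> t < h \<Longrightarrow> \<phi> differentiable (at t)"
    using D real_differentiable_def by (meson less_eq_real_def)
  ultimately obtain l \<xi> where xi: "0 < \<xi>" "\<xi> < h" "DERIV \<phi> \<xi> :> l" "\<phi> h - \<phi> 0 = (h - 0) * l"
    using MVT[OF h, of \<phi>] by auto
  have l: "l = pd f a ((x + \<xi> *\<^sub>R u) + h *\<^sub>R v) - pd f a (x + \<xi> *\<^sub>R u)"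
    using D[of \<xi>] xi DERIV_unique by (force simp: add_ac)
  have "\<exists>z. 0 < z \<and> z < h \<and> pd f a ((x + \<xi> *\<^sub>R u) + h *\<^sub>R axis b 1) - pd f a (x + \<xi> *\<^sub>R u)
      = h * pd (pd f a) b ((x + \<xi> *\<^sub>R u) + z *\<^sub>R axis b 1)"
  proof (rule mvt_line[OF h])
    fix s assume "0 \<le> s" "s \<le> h"
    thus "pd f a differentiable (at (x + \<xi> *\<^sub>R u + s *\<^sub>R axis b 1))"
      using d1 inU[of \<xi> s] xi unfolding u_def by auto
  qed
  then obtain \<eta> where eta: "0 < \<eta>" "\<eta> < h" "pd f a ((x + \<xi> *\<^sub>R u) + h *\<^sub>R v) - pd f a (x + \<xi> *\<^sub>R u)
      = h * pd (pd f a) b ((x + \<xi> *\<^sub>R u) + \<eta> *\<^sub>R v)" unfolding v_def by blast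
  have nu: "norm u = 1" "norm v = 1" unfolding u_def v_def by simp_all
  have "norm ((x + \<xi> *\<^sub>R u + \<eta> *\<^sub>R v) - x) \<le> norm (\<xi> *\<^sub>R u) + norm (\<eta> *\<^sub>R v)"
    using norm_triangle_ineq[of "\<xi> *\<^sub>R u" "\<eta> *\<^sub>R v"] by (simp add: add.assoc)
  also have "\<dots> = \<xi> + \<eta>" using nu xi eta by simp
  finally have "norm ((x + \<xi> *\<^sub>R u + \<eta> *\<^sub>R v) - x) \<le> 2 * h" using xi eta by simp
  moreover have "f (x + h *\<^sub>R u + h *\<^sub>R v) - f (x + h *\<^sub>R u) - f (x + h *\<^sub>R v) + f x = \<phi> h - \<phi> 0"
    unfolding \<phi>_def by (simp add: add_ac)
  ultimately show ?thesis using xi l eta unfolding u_def v_def by (intro exI[of _ "x + \<xi> *\<^sub>R u + \<eta> *\<^sub>R v"]) (auto simp: u_def v_def)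
qed


lemma schwarz:
  fixes f :: "real^3 \<Rightarrow> real"
  assumes U: "open U" "x \<in> U" and d0: "\<forall>y\<in>U. f differentiable (at y)"
    and d1: "\<forall>y\<in>U. \<forall>i. pd f i differentiable (at y)"
    and d2: "\<forall>i j. pd (pd f i) j differentiable (at x)"
  shows "pd (pd f a) b x = pd (pd f b) a x"
proof (rule ccontr)
  let ?A = "pd (pd f a) b x" and ?B = "pd (pd f b) a x"
  assume ne: "?A \<noteq> ?B"
  define \<epsilon> where "\<epsilon> = \<bar>?A - ?B\<bar> / 2"
  have ep: "\<epsilon> > 0" using ne unfolding \<epsilon>_def by simp
  obtain r where r: "r > 0" "ball x r \<subseteq> U" using U open_contains_ball by blast
  have cA: "isCont (pd (pd f a) b) x" and cB: "isCont (pd (pd f b) a) x"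
    using d2 differentiable_imp_continuous_within by blast+
  obtain d1 where dd1: "d1 > 0" "\<forall>y. dist y x < d1 \<longrightarrow> dist (pd (pd f a) b y) ?A < \<epsilon>"
    using cA ep unfolding continuous_at_eps_delta by blast
  obtain d2 where dd2: "d2 > 0" "\<forall>y. dist y x < d2 \<longrightarrow> dist (pd (pd f b) a y) ?B < \<epsilon>"
    using cB ep unfolding continuous_at_eps_delta by blast
  define h where "h = min (min d1 d2) r / 4"
  have h: "h > 0" "2*h < d1" "2*h < d2" "2*h < r" using dd1 dd2 r unfolding h_def by auto
  have inU: "x + t *\<^sub>R axis i 1 + s *\<^sub>R axis j 1 \<in> U"
    if "0 \<le> t" "t \<le> h" "0 \<le> s" "s \<le> h" for t s i j
  proof -
    have "norm (t *\<^sub>R axis i (1::real) + s *\<^sub>R axis j 1 :: real^3) \<le> norm (t *\<^sub>R axis i (1::real) :: real^3) + norm (s *\<^sub>R axis j (1::real) :: real^3)"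
      by (rule norm_triangle_ineq)
    also have "\<dots> = t + s" using that by simp
    finally have "dist (x + (t *\<^sub>R axis i 1 + s *\<^sub>R axis j 1)) x < r"
      using that h by (simp add: dist_norm)
    thus ?thesis using r by (auto simp: dist_commute add.assoc)
  qed
  have d1a: "\<forall>y\<in>U. pd f i differentiable (at y)" for i using d1 by blast
  obtain p where p: "norm (p - x) \<le> 2*h"
     "f (x + h *\<^sub>R axis a 1 + h *\<^sub>R axis b 1) - f (x + h *\<^sub>R axis a 1) - f (x + h *\<^sub>R axis b 1) + f x
       = h * h * pd (pd f a) b p"
    using mvt2[OF d0 d1a h(1), of x a b] inU by blast
  obtain q where q: "norm (q - x) \<le> 2*h"
     "f (x + h *\<^sub>R axis b 1 + h *\<^sub>R axis a 1) - f (x + h *\<^sub>R axis b 1) - f (x + h *\<^sub>R axis a 1) + f x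
       = h * h * pd (pd f b) a q"
    using mvt2[OF d0 d1a h(1), of x b a] inU by blast
  have "h * h * pd (pd f a) b p = h * h * pd (pd f b) a q"
  proof -
    have "f (x + h *\<^sub>R axis a 1 + h *\<^sub>R axis b 1) = f (x + h *\<^sub>R axis b 1 + h *\<^sub>R axis a 1)"
      by (simp add: add_ac)
    thus ?thesis using p(2) q(2) by linarith
  qed
  hence eq: "pd (pd f a) b p = pd (pd f b) a q" using h by simp
  have "dist (pd (pd f a) b p) ?A < \<epsilon>" using dd1 p h by (simp add: dist_norm)
  moreover have "dist (pd (pd f b) a q) ?B < \<epsilon>" using dd2 q h by (simp add: dist_norm)
  ultimately have "\<bar>?A - ?B\<bar> < 2 * \<epsilon>" using eq by (simp add: dist_real_def)
  thus False unfolding \<epsilon>_def by simp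
qed


lemma smooth_schwarz:
  fixes f :: "real^3 \<Rightarrow> real"
  assumes "open U" "x \<in> U" "smooth_on U f"
  shows "pd (pd f a) b x = pd (pd f b) a x"
proof (rule schwarz[OF assms(1,2)])
  show "\<forall>y\<in>U. f differentiable (at y)" using assms(3) unfolding smooth_on_def
    by (metis ipd.simps(1))
  show "\<forall>y\<in>U. \<forall>i. pd f i differentiable (at y)" using assms(3) unfolding smooth_on_def
    by (metis ipd.simps)
  show "\<forall>i j. pd (pd f i) j differentiable (at x)" using assms(2,3) unfolding smooth_on_def
    by (metis ipd.simps)
qed

definition nx :: "3 \<Rightarrow> 3" where "nx i = (if i = 1 then 2 else if i = 2 then 3 else 1)"

lemma nx_simps [simp]: "nx 1 = 2" "nx 2 = 3" "nx 3 = 1"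
  unfolding nx_def by simp_all

definition adj3 :: "real^3^3 \<Rightarrow> real^3^3" where
  "adj3 G = (\<chi> i j. G$(nx j)$(nx i) * G$(nx (nx j))$(nx (nx i)) - G$(nx j)$(nx (nx i)) * G$(nx (nx j))$(nx i))"

lemma adj3_left: "adj3 G ** G = det G *\<^sub>R mat 1"
  unfolding adj3_def matrix_matrix_mult_def
  by (simp add: vec_eq_iff forall_3 sum_3 det_3 mat_def algebra_simps)

lemma adj3_right: "G ** adj3 G = det G *\<^sub>R mat 1"
  unfolding adj3_def matrix_matrix_mult_def
  by (simp add: vec_eq_iff forall_3 sum_3 det_3 mat_def algebra_simps)


lemma inv_props:
  fixes G :: "real^3^3"
  assumes "det G \<noteq> 0"
  shows "matrix_inv G ** G = mat 1" "G ** matrix_inv G = mat 1"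
    "matrix_inv G = (1 / det G) *\<^sub>R adj3 G"
proof -
  have "invertible G" using assms invertible_det_nz by blast
  then have ex: "\<exists>A'. G ** A' = mat 1 \<and> A' ** G = mat 1" unfolding invertible_def by blast
  have *: "G ** matrix_inv G = mat 1 \<and> matrix_inv G ** G = mat 1"
    unfolding matrix_inv_def using someI_ex[OF ex] by blast
  thus "matrix_inv G ** G = mat 1" "G ** matrix_inv G = mat 1" by auto
  define X where "X = (1 / det G) *\<^sub>R adj3 G"
  have "X ** G = mat 1" unfolding X_def
    using assms by (simp add: scalar_matrix_assoc[symmetric] adj3_left)
  hence "X = X ** (G ** matrix_inv G)" using * by simp
  also have "\<dots> = matrix_inv G" using \<open>X ** G = mat 1\<close> by (simp add: matrix_mul_assoc)
  finally show "matrix_inv G = (1 / det G) *\<^sub>R adj3 G" unfolding X_def by simp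
qed

lemma inv_sym:
  fixes G :: "real^3^3"
  assumes "det G \<noteq> 0" "transpose G = G"
  shows "transpose (matrix_inv G) = matrix_inv G"
proof -
  have "transpose (matrix_inv G) ** G = transpose (transpose G ** matrix_inv G)"
    by (simp add: matrix_transpose_mul)
  also have "\<dots> = mat 1" using assms inv_props by (simp add: transpose_mat)
  finally have 1: "transpose (matrix_inv G) ** G = mat 1" .
  have "transpose (matrix_inv G) = transpose (matrix_inv G) ** (G ** matrix_inv G)"
    using inv_props(2)[OF assms(1)] by simp
  also have "\<dots> = matrix_inv G" using 1 by (simp add: matrix_mul_assoc)
  finally show ?thesis .
qed

lemma met_open: "riem_or_lor_metric U g \<Longrightarrow> open U"
  unfolding riem_or_lor_metric_def by blast

lemma met_sym: "riem_or_lor_metric U g \<Longrightarrow> y \<in> U \<Longrightarrow> g y $ a $ b = g y $ b $ a"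
proof -
  assume a: "riem_or_lor_metric U g" "y \<in> U"
  hence "transpose (g y) = g y" unfolding riem_or_lor_metric_def by blast
  hence "transpose (g y) $ a $ b = g y $ a $ b" by simp
  thus ?thesis by (simp add: transpose_def)
qed

lemma met_det: "riem_or_lor_metric U g \<Longrightarrow> y \<in> U \<Longrightarrow> det (g y) \<noteq> 0"
  unfolding riem_or_lor_metric_def by blast

lemma met_smooth: "riem_or_lor_metric U g \<Longrightarrow> smooth_on U (\<lambda>y. g y $ a $ b)"
  unfolding riem_or_lor_metric_def by blast

lemma ginv_left: "riem_or_lor_metric U g \<Longrightarrow> y \<in> U \<Longrightarrow>
   (\<Sum>e\<in>UNIV. ginv g y c e * g y $ e $ d) = (if c = d then 1 else 0)"
proof -
  assume a: "riem_or_lor_metric U g" "y \<in> U"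
  have "(matrix_inv (g y) ** g y) $ c $ d = mat 1 $ c $ d" using inv_props(1)[OF met_det[OF a]] by simp
  thus ?thesis unfolding ginv_def matrix_matrix_mult_def mat_def by simp
qed

lemma ginv_right: "riem_or_lor_metric U g \<Longrightarrow> y \<in> U \<Longrightarrow>
   (\<Sum>e\<in>UNIV. g y $ c $ e * ginv g y e d) = (if c = d then 1 else 0)"
proof -
  assume a: "riem_or_lor_metric U g" "y \<in> U"
  have "(g y ** matrix_inv (g y)) $ c $ d = mat 1 $ c $ d" using inv_props(2)[OF met_det[OF a]] by simp
  thus ?thesis unfolding ginv_def matrix_matrix_mult_def mat_def by simp
qed

lemma ginv_sym: "riem_or_lor_metric U g \<Longrightarrow> y \<in> U \<Longrightarrow> ginv g y a b = ginv g y b a"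
proof -
  assume a: "riem_or_lor_metric U g" "y \<in> U"
  hence "transpose (g y) = g y" unfolding riem_or_lor_metric_def by blast
  hence "transpose (matrix_inv (g y)) $ a $ b = matrix_inv (g y) $ a $ b"
    using inv_sym[OF met_det[OF a]] by simp
  thus ?thesis unfolding ginv_def by (simp add: transpose_def)
qed

lemma g_diff: "riem_or_lor_metric U g \<Longrightarrow> y \<in> U \<Longrightarrow> (\<lambda>y. g y $ a $ b) differentiable (at y)"
  using met_smooth[of U g a b] unfolding smooth_on_def using ipd.simps(1) by metis

lemma dg_diff: "riem_or_lor_metric U g \<Longrightarrow> y \<in> U \<Longrightarrow> pd (\<lambda>y. g y $ a $ b) i differentiable (at y)"
proof -
  assume a: "riem_or_lor_metric U g" "y \<in> U"
  have "ipd [i] (\<lambda>y. g y $ a $ b) differentiable (at y)" using met_smooth[OF a(1), of a b] a(2)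
    unfolding smooth_on_def by blast
  thus ?thesis by simp
qed

lemma ginv_diff:
  assumes "riem_or_lor_metric U g" "x \<in> U"
  shows "(\<lambda>y. ginv g y c d) differentiable (at x)"
proof (rule diff_cong[OF met_open[OF assms(1)] assms(2)])
  show "\<And>y. y \<in> U \<Longrightarrow> adj3 (g y) $ c $ d / det (g y) = ginv g y c d"
    using inv_props(3)[OF met_det[OF assms(1)]] unfolding ginv_def by simp
  have gd: "\<And>a b. (\<lambda>y. g y $ a $ b) differentiable (at x)" using g_diff assms by blast
  show "(\<lambda>y. adj3 (g y) $ c $ d / det (g y)) differentiable (at x)"
    unfolding adj3_def det_3 using met_det[OF assms] unfolding det_3
    by (intro differentiable_divide) (auto intro!: differentiable_mult differentiable_diff differentiable_add gd)
qed


lemma dg_sym: "riem_or_lor_metric U g \<Longrightarrow> y \<in> U \<Longrightarrow>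
   pd (\<lambda>y. g y $ a $ b) i y = pd (\<lambda>y. g y $ b $ a) i y"
  by (rule pd_cong[OF met_open]) (auto intro: met_sym)

lemma christ_sym: "riem_or_lor_metric U g \<Longrightarrow> y \<in> U \<Longrightarrow> christ g c a b y = christ g c b a y"
  unfolding christ_def using dg_sym[of U g y a b] by (simp add: algebra_simps)

lemma christ_eq: "christ g c a b = (\<lambda>y. (1/2) * (\<Sum>d\<in>UNIV. ginv g y c d *
      (pd (\<lambda>y. g y $ b $ d) a y + pd (\<lambda>y. g y $ a $ d) b y - pd (\<lambda>y. g y $ a $ b) d y)))"
  by (rule ext) (simp add: christ_def)

lemma christ_diff: "riem_or_lor_metric U g \<Longrightarrow> x \<in> U \<Longrightarrow> christ g c a b differentiable (at x)"
proof -
  assume a: "riem_or_lor_metric U g" "x \<in> U"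
  have "\<And>d. (\<lambda>y. ginv g y c d *
      (pd (\<lambda>y. g y $ b $ d) a y + pd (\<lambda>y. g y $ a $ d) b y - pd (\<lambda>y. g y $ a $ b) d y)) differentiable (at x)"
    using ginv_diff[OF a] dg_diff[OF a] by simp
  hence "(\<lambda>y. (\<Sum>d\<in>UNIV. ginv g y c d *
      (pd (\<lambda>y. g y $ b $ d) a y + pd (\<lambda>y. g y $ a $ d) b y - pd (\<lambda>y. g y $ a $ b) d y))) differentiable (at x)"
    by (intro differentiable_sum) auto
  thus ?thesis unfolding christ_eq by simp
qed

lemma christ_trace: "riem_or_lor_metric U g \<Longrightarrow> y \<in> U \<Longrightarrow>
  (\<Sum>c\<in>UNIV. christ g c c b y) = (1/2) * (\<Sum>c\<in>UNIV. \<Sum>d\<in>UNIV. ginv g y c d * pd (\<lambda>y. g y $ c $ d) b y)"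
  unfolding christ_def
  by (simp add: sum_3 dg_sym[of U g y _ _ b] ginv_sym[of U g y] dg_sym[of U g y] algebra_simps)


lemma pd_mult:
  fixes f h :: "real^3 \<Rightarrow> real"
  assumes "f differentiable (at x)" "h differentiable (at x)"
  shows "pd (\<lambda>y. f y * h y) i x = f x * pd h i x + pd f i x * h x"
  using pd_has[OF has_derivative_mult[OF has_pd[OF assms(1)] has_pd[OF assms(2)]], of i]
  unfolding pd_def by simp

lemma pd_sum:
  fixes f :: "'j \<Rightarrow> real^3 \<Rightarrow> real"
  assumes "finite S" "\<And>j. j \<in> S \<Longrightarrow> f j differentiable (at x)"
  shows "pd (\<lambda>y. \<Sum>j\<in>S. f j y) i x = (\<Sum>j\<in>S. pd (f j) i x)"
proof -
  have "((\<lambda>y. \<Sum>j\<in>S. f j y) has_derivative (\<lambda>v. \<Sum>j\<in>S. frechet_derivative (f j) (at x) v)) (at x)"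
    using assms by (intro has_derivative_sum) (auto intro: has_pd)
  from pd_has[OF this, of i] show ?thesis unfolding pd_def by simp
qed

lemma pd_cmult:
  fixes f :: "real^3 \<Rightarrow> real"
  assumes "f differentiable (at x)"
  shows "pd (\<lambda>y. c * f y) i x = c * pd f i x"
  using pd_mult[OF differentiable_const assms, of c] by (simp add: pd_const)

lemma contract3:
  fixes X Y :: "3 \<Rightarrow> real" and G Mi :: "3 \<Rightarrow> 3 \<Rightarrow> real"
  assumes "\<forall>d. (\<Sum>e\<in>UNIV. X e * G e d) = Y d" "\<forall>e f. (\<Sum>d\<in>UNIV. G e d * Mi d f) = (if e = f then 1 else 0)"
  shows "X f = (\<Sum>d\<in>UNIV. Y d * Mi d f)"
proof -
  have "(\<Sum>d\<in>UNIV. Y d * Mi d f) = (\<Sum>d\<in>UNIV. \<Sum>e\<in>UNIV. X e * G e d * Mi d f)"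
    using assms(1) by (simp add: sum_distrib_right[symmetric])
  also have "\<dots> = (\<Sum>e\<in>UNIV. X e * (\<Sum>d\<in>UNIV. G e d * Mi d f))"
    by (subst sum.swap) (simp add: sum_distrib_left mult.assoc)
  also have "\<dots> = (\<Sum>e\<in>UNIV. if e = f then X e else 0)" using assms(2)
    by (intro sum.cong) auto
  also have "\<dots> = X f" by simp
  finally show ?thesis by simp
qed

lemma dginv:
  assumes a: "riem_or_lor_metric U g" "x \<in> U"
  shows "pd (\<lambda>y. ginv g y c f) i x
     = (\<Sum>d\<in>UNIV. (- (\<Sum>e\<in>UNIV. ginv g x c e * pd (\<lambda>y. g y $ e $ d) i x)) * ginv g x d f)"
proof (rule contract3)
  show "\<forall>e f. (\<Sum>d\<in>UNIV. g x $ e $ d * ginv g x d f) = (if e = f then 1 else 0)"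
    using ginv_right[OF a] by blast
  show "\<forall>d. (\<Sum>e\<in>UNIV. pd (\<lambda>y. ginv g y c e) i x * g x $ e $ d)
     = - (\<Sum>e\<in>UNIV. ginv g x c e * pd (\<lambda>y. g y $ e $ d) i x)"
  proof
    fix d
    have "pd (\<lambda>y. \<Sum>e\<in>UNIV. ginv g y c e * g y $ e $ d) i x = pd (\<lambda>y. if c = d then 1 else 0) i x"
      by (rule pd_cong[OF met_open[OF a(1)] a(2)]) (rule ginv_left[OF a(1)])
    also have "\<dots> = 0" by (rule pd_const)
    finally have 0: "pd (\<lambda>y. \<Sum>e\<in>UNIV. ginv g y c e * g y $ e $ d) i x = 0" .
    have "pd (\<lambda>y. \<Sum>e\<in>UNIV. ginv g y c e * g y $ e $ d) i x
       = (\<Sum>e\<in>UNIV. pd (\<lambda>y. ginv g y c e * g y $ e $ d) i x)"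
      by (rule pd_sum) (auto intro: differentiable_mult ginv_diff[OF a] g_diff[OF a])
    also have "\<dots> = (\<Sum>e\<in>UNIV. ginv g x c e * pd (\<lambda>y. g y $ e $ d) i x + pd (\<lambda>y. ginv g y c e) i x * g x $ e $ d)"
      by (rule sum.cong[OF refl], rule pd_mult) (auto intro: ginv_diff[OF a] g_diff[OF a])
    finally show "(\<Sum>e\<in>UNIV. pd (\<lambda>y. ginv g y c e) i x * g x $ e $ d)
     = - (\<Sum>e\<in>UNIV. ginv g x c e * pd (\<lambda>y. g y $ e $ d) i x)"
      using 0 by (simp add: sum.distrib)
  qed
qed


lemma quad_sym:
  fixes M A B :: "3 \<Rightarrow> 3 \<Rightarrow> real"
  assumes "\<And>i j. A i j = A j i" "\<And>i j. B i j = B j i"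
  shows "(\<Sum>c\<in>UNIV. \<Sum>d\<in>UNIV. (\<Sum>d'\<in>UNIV. (- (\<Sum>e\<in>UNIV. M c e * A e d')) * M d' d) * B c d)
       = (\<Sum>c\<in>UNIV. \<Sum>d\<in>UNIV. (\<Sum>d'\<in>UNIV. (- (\<Sum>e\<in>UNIV. M c e * B e d')) * M d' d) * A c d)"
  by (simp add: sum_3 assms algebra_simps)

lemma ricci_alg:
  fixes \<Gamma> :: "3 \<Rightarrow> 3 \<Rightarrow> 3 \<Rightarrow> real" and P :: "3 \<Rightarrow> 3 \<Rightarrow> 3 \<Rightarrow> 3 \<Rightarrow> real"
  assumes "\<And>c a b. \<Gamma> c a b = \<Gamma> c b a" "\<And>i c a b. P i c a b = P i c b a"
    "(\<Sum>c\<in>UNIV. P a c c b) = (\<Sum>c\<in>UNIV. P b c c a)"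
  shows "(\<Sum>c\<in>UNIV. P a c c b - P c c a b + (\<Sum>e\<in>UNIV. \<Gamma> c a e * \<Gamma> e c b - \<Gamma> c c e * \<Gamma> e a b))
       = (\<Sum>c\<in>UNIV. P b c c a - P c c b a + (\<Sum>e\<in>UNIV. \<Gamma> c b e * \<Gamma> e c a - \<Gamma> c c e * \<Gamma> e b a))"
  using assms(3) by (simp add: sum_3 assms(1,2) algebra_simps)


lemma trace_pd:
  assumes a: "riem_or_lor_metric U g" "x \<in> U"
  shows "(\<Sum>c\<in>UNIV. pd (christ g c c b) i x)
   = (1/2) * ((\<Sum>c\<in>UNIV. \<Sum>d\<in>UNIV. ginv g x c d * pd (pd (\<lambda>y. g y $ c $ d) b) i x)
     + (\<Sum>c\<in>UNIV. \<Sum>d\<in>UNIV. (\<Sum>d'\<in>UNIV. (- (\<Sum>e\<in>UNIV. ginv g x c e * pd (\<lambda>y. g y $ e $ d') i x)) * ginv g x d' d)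
           * pd (\<lambda>y. g y $ c $ d) b x))"
proof -
  have "(\<Sum>c\<in>UNIV. pd (christ g c c b) i x) = pd (\<lambda>y. \<Sum>c\<in>UNIV. christ g c c b y) i x"
    by (rule pd_sum[symmetric]) (auto intro: christ_diff[OF a])
  also have "\<dots> = pd (\<lambda>y. (1/2) * (\<Sum>c\<in>UNIV. \<Sum>d\<in>UNIV. ginv g y c d * pd (\<lambda>y. g y $ c $ d) b y)) i x"
    by (rule pd_cong[OF met_open[OF a(1)] a(2)]) (rule christ_trace[OF a(1)])
  also have "\<dots> = (1/2) * pd (\<lambda>y. (\<Sum>c\<in>UNIV. \<Sum>d\<in>UNIV. ginv g y c d * pd (\<lambda>y. g y $ c $ d) b y)) i x"
    by (rule pd_cmult) (auto intro!: differentiable_sum differentiable_mult ginv_diff[OF a] dg_diff[OF a])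
  also have "pd (\<lambda>y. (\<Sum>c\<in>UNIV. \<Sum>d\<in>UNIV. ginv g y c d * pd (\<lambda>y. g y $ c $ d) b y)) i x
     = (\<Sum>c\<in>UNIV. pd (\<lambda>y. \<Sum>d\<in>UNIV. ginv g y c d * pd (\<lambda>y. g y $ c $ d) b y) i x)"
    by (rule pd_sum) (auto intro!: differentiable_sum differentiable_mult ginv_diff[OF a] dg_diff[OF a])
  also have "\<dots> = (\<Sum>c\<in>UNIV. \<Sum>d\<in>UNIV. pd (\<lambda>y. ginv g y c d * pd (\<lambda>y. g y $ c $ d) b y) i x)"
    by (rule sum.cong[OF refl], rule pd_sum) (auto intro!: differentiable_mult ginv_diff[OF a] dg_diff[OF a])
  also have "\<dots> = (\<Sum>c\<in>UNIV. \<Sum>d\<in>UNIV. ginv g x c d * pd (pd (\<lambda>y. g y $ c $ d) b) i x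
        + pd (\<lambda>y. ginv g y c d) i x * pd (\<lambda>y. g y $ c $ d) b x)"
    by (rule sum.cong[OF refl], rule sum.cong[OF refl], rule pd_mult) (auto intro!: ginv_diff[OF a] dg_diff[OF a])
  also have "\<dots> = (\<Sum>c\<in>UNIV. \<Sum>d\<in>UNIV. ginv g x c d * pd (pd (\<lambda>y. g y $ c $ d) b) i x)
     + (\<Sum>c\<in>UNIV. \<Sum>d\<in>UNIV. (\<Sum>d'\<in>UNIV. (- (\<Sum>e\<in>UNIV. ginv g x c e * pd (\<lambda>y. g y $ e $ d') i x)) * ginv g x d' d)
           * pd (\<lambda>y. g y $ c $ d) b x)"
    by (simp add: sum.distrib dginv[OF a])
  finally show ?thesis .
qed

lemma trace_sym:
  assumes a: "riem_or_lor_metric U g" "x \<in> U"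
  shows "(\<Sum>c\<in>UNIV. pd (christ g c c b) i x) = (\<Sum>c\<in>UNIV. pd (christ g c c i) b x)"
proof -
  have 1: "(\<Sum>c\<in>UNIV. \<Sum>d\<in>UNIV. ginv g x c d * pd (pd (\<lambda>y. g y $ c $ d) b) i x)
    = (\<Sum>c\<in>UNIV. \<Sum>d\<in>UNIV. ginv g x c d * pd (pd (\<lambda>y. g y $ c $ d) i) b x)"
    using smooth_schwarz[OF met_open[OF a(1)] a(2) met_smooth[OF a(1)]] by simp
  have 2: "(\<Sum>c\<in>UNIV. \<Sum>d\<in>UNIV. (\<Sum>d'\<in>UNIV. (- (\<Sum>e\<in>UNIV. ginv g x c e * pd (\<lambda>y. g y $ e $ d') i x)) * ginv g x d' d)
           * pd (\<lambda>y. g y $ c $ d) b x)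
     = (\<Sum>c\<in>UNIV. \<Sum>d\<in>UNIV. (\<Sum>d'\<in>UNIV. (- (\<Sum>e\<in>UNIV. ginv g x c e * pd (\<lambda>y. g y $ e $ d') b x)) * ginv g x d' d)
           * pd (\<lambda>y. g y $ c $ d) i x)"
    by (rule quad_sym[of "\<lambda>e d'. pd (\<lambda>y. g y $ e $ d') i x" "\<lambda>c d. pd (\<lambda>y. g y $ c $ d) b x"
          "\<lambda>c e. ginv g x c e"]) (auto intro: dg_sym[OF a(1) a(2)])
  show ?thesis unfolding trace_pd[OF a] 1 2 ..
qed

lemma ric_sym:
  assumes a: "riem_or_lor_metric U g" "x \<in> U"
  shows "ric g a b x = ric g b a x"
  unfolding ric_def riem_def
  by (rule ricci_alg[of "\<lambda>c a b. christ g c a b x" "\<lambda>i c a b. pd (christ g c a b) i x"])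
     (auto intro: christ_sym[OF a] pd_cong[OF met_open[OF a(1)] a(2)] christ_sym[OF a(1)] trace_sym[OF a])



definition eps :: "3 \<Rightarrow> 3 \<Rightarrow> 3 \<Rightarrow> real" where
  "eps a b c = (if (a,b,c) = (1,2,3) \<or> (a,b,c) = (2,3,1) \<or> (a,b,c) = (3,1,2) then 1
     else if (a,b,c) = (2,1,3) \<or> (a,b,c) = (3,2,1) \<or> (a,b,c) = (1,3,2) then -1 else 0)"

lemma eps_vals [simp]:
  "eps 1 2 3 = 1" "eps 2 3 1 = 1" "eps 3 1 2 = 1" "eps 2 1 3 = -1" "eps 3 2 1 = -1" "eps 1 3 2 = -1"
  "eps 1 1 c = 0" "eps 2 2 c = 0" "eps 3 3 c = 0" "eps a 1 1 = 0" "eps a 2 2 = 0" "eps a 3 3 = 0"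
  "eps 1 b 1 = 0" "eps 2 b 2 = 0" "eps 3 b 3 = 0"
  unfolding eps_def by auto

lemma skew_eps:
  fixes E :: "3 \<Rightarrow> 3 \<Rightarrow> 3 \<Rightarrow> real"
  assumes h1: "\<And>a b c. E b a c = - E a b c" and h2: "\<And>a b c. E a c b = - E a b c"
  shows "E a b c = E 1 2 3 * eps a b c"
proof -
  have z1: "E a a c = 0" for a c using h1[of a a c] by simp
  have z2: "E a c c = 0" for a c using h2[of a c c] by simp
  have z3: "E a c a = 0" for a c using h1[of c a a] z2[of c a] by simp
  have p1: "E 2 1 3 = - E 1 2 3" "E 1 3 2 = - E 1 2 3" using h1[of 1 2 3] h2[of 1 2 3] by simp_all
  have p2: "E 3 1 2 = E 1 2 3" using h1[of 1 3 2] h2[of 1 2 3] by simp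
  have p3: "E 2 3 1 = E 1 2 3" using h2[of 2 1 3] h1[of 1 2 3] by simp
  have p4: "E 3 2 1 = - E 1 2 3" using h1[of 2 3 1] p3 by simp
  show ?thesis
    using exhaust_3[of a] exhaust_3[of b] exhaust_3[of c]
    by (elim disjE) (simp_all add: z1 z2 z3 p1 p2 p3 p4)
qed

definition detf :: "(3 \<Rightarrow> 3 \<Rightarrow> real) \<Rightarrow> real" where
  "detf M = (\<Sum>b\<in>UNIV. \<Sum>c\<in>UNIV. \<Sum>d\<in>UNIV. M 1 b * M 2 c * M 3 d * eps b c d)"

lemma eps_det:
  "(\<Sum>b\<in>UNIV. \<Sum>c\<in>UNIV. \<Sum>d\<in>UNIV. M p b * M q c * M r d * eps b c d) = detf M * eps p q r"
  unfolding detf_def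
  using exhaust_3[of p] exhaust_3[of q] exhaust_3[of r]
  by (elim disjE) (simp_all add: sum_3 algebra_simps)

lemma eps_contr:
  "(\<Sum>b\<in>UNIV. eps e f b * eps b c d) = (if e = c \<and> f = d then 1 else 0) - (if e = d \<and> f = c then 1 else 0)"
  using exhaust_3[of e] exhaust_3[of f] exhaust_3[of c] exhaust_3[of d]
  by (elim disjE) (simp_all add: sum_3)


lemma rearr1:
  fixes X :: "3 \<Rightarrow> real" and M :: "3 \<Rightarrow> 3 \<Rightarrow> real" and Y :: "3 \<Rightarrow> 3 \<Rightarrow> 3 \<Rightarrow> real"
  shows "(\<Sum>b\<in>UNIV. (\<Sum>b'\<in>UNIV. X b' * M b' b) * (\<Sum>c'\<in>UNIV. \<Sum>d'\<in>UNIV. Y b c' d'))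
    = (\<Sum>b'\<in>UNIV. X b' * (\<Sum>b\<in>UNIV. \<Sum>c'\<in>UNIV. \<Sum>d'\<in>UNIV. M b' b * Y b c' d'))"
  by (simp add: sum_3 algebra_simps)

lemma rearr2:
  fixes N :: "3 \<Rightarrow> real" and Z :: "3 \<Rightarrow> 3 \<Rightarrow> 3 \<Rightarrow> real" and C :: "3 \<Rightarrow> 3 \<Rightarrow> real"
  shows "(\<Sum>b\<in>UNIV. N b * ((1/2) * (\<Sum>c\<in>UNIV. \<Sum>d\<in>UNIV. Z b c d * C c d)))
    = (1/2) * (\<Sum>c\<in>UNIV. \<Sum>d\<in>UNIV. (\<Sum>b\<in>UNIV. N b * Z b c d) * C c d)"
  by (simp add: sum_3 algebra_simps)

lemma delta_skew:
  fixes C :: "3 \<Rightarrow> 3 \<Rightarrow> real"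
  shows "(\<Sum>c\<in>UNIV. \<Sum>d\<in>UNIV. (k * ((if e = c \<and> f = d then 1 else 0) - (if e = d \<and> f = c then 1 else 0))) * C c d)
     = k * (C e f - C f e)"
  using exhaust_3[of e] exhaust_3[of f]
  by (elim disjE) (simp_all add: sum_3 algebra_simps)

lemma hodge_K:
  fixes E :: "3 \<Rightarrow> 3 \<Rightarrow> 3 \<Rightarrow> real" and M :: "3 \<Rightarrow> 3 \<Rightarrow> real"
  assumes h1: "\<And>a b c. E b a c = - E a b c" and h2: "\<And>a b c. E a c b = - E a b c"
  shows "(\<Sum>b\<in>UNIV. (\<Sum>b'\<in>UNIV. E e f b' * M b' b) * (\<Sum>c'\<in>UNIV. \<Sum>d'\<in>UNIV. M c c' * M d d' * E b c' d'))
    = (E 1 2 3)^2 * detf M * ((if e = c \<and> f = d then 1 else 0) - (if e = d \<and> f = c then 1 else 0))"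
proof -
  obtain l where l: "l = E 1 2 3" by blast
  have sE: "\<And>a b c. E a b c = l * eps a b c" using skew_eps[of E, OF h1 h2] l by blast
  have "(\<Sum>b\<in>UNIV. (\<Sum>b'\<in>UNIV. E e f b' * M b' b) * (\<Sum>c'\<in>UNIV. \<Sum>d'\<in>UNIV. M c c' * M d d' * E b c' d'))
    = (\<Sum>b'\<in>UNIV. E e f b' * (\<Sum>b\<in>UNIV. \<Sum>c'\<in>UNIV. \<Sum>d'\<in>UNIV. M b' b * (M c c' * M d d' * E b c' d')))"
    by (rule rearr1)
  also have "\<dots> = (\<Sum>b'\<in>UNIV. l * eps e f b' * (l * (\<Sum>b\<in>UNIV. \<Sum>c'\<in>UNIV. \<Sum>d'\<in>UNIV. M b' b * M c c' * M d d' * eps b c' d')))"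
    by (simp add: sE sum_distrib_left algebra_simps)
  also have "\<dots> = (\<Sum>b'\<in>UNIV. l * eps e f b' * (l * (detf M * eps b' c d)))"
    by (simp add: eps_det)
  also have "\<dots> = l^2 * detf M * (\<Sum>b'\<in>UNIV. eps e f b' * eps b' c d)"
    by (simp add: sum_distrib_left power2_eq_square algebra_simps)
  finally show ?thesis using l by (simp add: eps_contr)
qed

lemma hodge_inv_alg:
  fixes E :: "3 \<Rightarrow> 3 \<Rightarrow> 3 \<Rightarrow> real" and M :: "3 \<Rightarrow> 3 \<Rightarrow> real" and C :: "3 \<Rightarrow> 3 \<Rightarrow> real"
  assumes h1: "\<And>a b c. E b a c = - E a b c" and h2: "\<And>a b c. E a c b = - E a b c"
    and Cs: "\<And>c d. C d c = - C c d"
  shows "(\<Sum>b\<in>UNIV. (\<Sum>b'\<in>UNIV. E e f b' * M b' b) *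
      ((1/2) * (\<Sum>c\<in>UNIV. \<Sum>d\<in>UNIV. (\<Sum>c'\<in>UNIV. \<Sum>d'\<in>UNIV. M c c' * M d d' * E b c' d') * C c d)))
    = (E 1 2 3)^2 * detf M * C e f"
proof -
  have "(\<Sum>b\<in>UNIV. (\<Sum>b'\<in>UNIV. E e f b' * M b' b) *
      ((1/2) * (\<Sum>c\<in>UNIV. \<Sum>d\<in>UNIV. (\<Sum>c'\<in>UNIV. \<Sum>d'\<in>UNIV. M c c' * M d d' * E b c' d') * C c d)))
    = (1/2) * (\<Sum>c\<in>UNIV. \<Sum>d\<in>UNIV. (\<Sum>b\<in>UNIV. (\<Sum>b'\<in>UNIV. E e f b' * M b' b) *
          (\<Sum>c'\<in>UNIV. \<Sum>d'\<in>UNIV. M c c' * M d d' * E b c' d')) * C c d)"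
    by (rule rearr2)
  also have "\<dots> = (1/2) * (\<Sum>c\<in>UNIV. \<Sum>d\<in>UNIV. ((E 1 2 3)^2 * detf M *
       ((if e = c \<and> f = d then 1 else 0) - (if e = d \<and> f = c then 1 else 0))) * C c d)"
    by (simp add: hodge_K[of E, OF h1 h2])
  also have "\<dots> = (1/2) * ((E 1 2 3)^2 * detf M * (C e f - C f e))"
    by (simp only: delta_skew)
  finally show ?thesis using Cs[of e f] by simp
qed

lemma norm_alg:
  fixes E :: "3 \<Rightarrow> 3 \<Rightarrow> 3 \<Rightarrow> real" and M :: "3 \<Rightarrow> 3 \<Rightarrow> real"
  assumes h1: "\<And>a b c. E b a c = - E a b c" and h2: "\<And>a b c. E a c b = - E a b c"
  shows "(\<Sum>a\<in>UNIV. \<Sum>b\<in>UNIV. \<Sum>c\<in>UNIV. \<Sum>a'\<in>UNIV. \<Sum>b'\<in>UNIV. \<Sum>c'\<in>UNIV.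
            M a a' * M b b' * M c c' * E a b c * E a' b' c') = (E 1 2 3)^2 * detf M * 6"
proof -
  obtain l where l: "l = E 1 2 3" by blast
  have sE: "\<And>a b c. E a b c = l * eps a b c" using skew_eps[of E, OF h1 h2] l by blast
  have inner: "(\<Sum>a'\<in>UNIV. \<Sum>b'\<in>UNIV. \<Sum>c'\<in>UNIV. M a a' * M b b' * M c c' * E a b c * E a' b' c')
     = (E 1 2 3)^2 * detf M * (eps a b c * eps a b c)" for a b c
  proof -
    have "(\<Sum>a'\<in>UNIV. \<Sum>b'\<in>UNIV. \<Sum>c'\<in>UNIV. M a a' * M b b' * M c c' * E a b c * E a' b' c')
      = (l * eps a b c * l) * (\<Sum>a'\<in>UNIV. \<Sum>b'\<in>UNIV. \<Sum>c'\<in>UNIV. M a a' * M b b' * M c c' * eps a' b' c')"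
      by (simp add: sE sum_distrib_left algebra_simps)
    also have "\<dots> = (E 1 2 3)^2 * detf M * (eps a b c * eps a b c)"
      using l eps_det[of M a b c] by (simp add: power2_eq_square)
    finally show ?thesis .
  qed
  show ?thesis unfolding inner
    by (simp add: sum_3 sum_distrib_left[symmetric])
qed



lemma antisym_sum:
  fixes F :: "3 \<Rightarrow> 3 \<Rightarrow> complex" and k :: "3 \<Rightarrow> complex"
  assumes "\<And>a b. F b a = - F a b"
  shows "(\<Sum>a\<in>UNIV. k a * (\<Sum>b\<in>UNIV. F a b * k b)) = 0"
proof -
  let ?S = "(\<Sum>a\<in>UNIV. \<Sum>b\<in>UNIV. k a * k b * F a b)"
  have "?S = (\<Sum>b\<in>UNIV. \<Sum>a\<in>UNIV. k a * k b * F a b)" by (rule sum.swap)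
  also have "\<dots> = (\<Sum>b\<in>UNIV. \<Sum>a\<in>UNIV. - (k b * k a * F b a))"
  proof (intro sum.cong refl)
    fix a b show "k a * k b * F a b = - (k b * k a * F b a)" using assms[of a b] by simp
  qed
  also have "\<dots> = - ?S" by (simp add: sum_negf)
  finally have "?S = 0" by simp
  moreover have "(\<Sum>a\<in>UNIV. k a * (\<Sum>b\<in>UNIV. F a b * k b)) = ?S"
    by (simp add: sum_distrib_left algebra_simps)
  ultimately show ?thesis by simp
qed

lemma inv_apply:
  fixes X k :: "3 \<Rightarrow> complex" and M G :: "3 \<Rightarrow> 3 \<Rightarrow> complex"
  assumes inv: "\<And>b e. (\<Sum>d\<in>UNIV. M b d * G d e) = (if b = e then 1 else 0)"
  shows "(\<Sum>d\<in>UNIV. (\<Sum>b'\<in>UNIV. X b' * M b' d) * (\<Sum>e\<in>UNIV. G d e * k e)) = (\<Sum>b'\<in>UNIV. X b' * k b')"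
proof -
  have "(\<Sum>d\<in>UNIV. (\<Sum>b'\<in>UNIV. X b' * M b' d) * (\<Sum>e\<in>UNIV. G d e * k e))
     = (\<Sum>b'\<in>UNIV. X b' * (\<Sum>e\<in>UNIV. (\<Sum>d\<in>UNIV. M b' d * G d e) * k e))"
    by (simp add: sum_3 algebra_simps)
  also have "\<dots> = (\<Sum>b'\<in>UNIV. X b' * (\<Sum>e\<in>UNIV. if b' = e then k e else 0))"
  proof (intro sum.cong refl arg_cong2[where f="(*)"])
    fix b' e show "(\<Sum>d\<in>UNIV. M b' d * G d e) * k e = (if b' = e then k e else 0)" by (simp add: inv)
  qed
  also have "\<dots> = (\<Sum>b'\<in>UNIV. X b' * k b')" by simp
  finally show ?thesis .
qed

lemma final_alg:
  fixes k :: "3 \<Rightarrow> complex" and G M \<Phi> :: "3 \<Rightarrow> 3 \<Rightarrow> complex" and E cot :: "3 \<Rightarrow> 3 \<Rightarrow> 3 \<Rightarrow> complex"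
    and \<kappa> :: complex
  assumes h1: "\<And>a b c. E b a c = - E a b c" and h2: "\<And>a b c. E a c b = - E a b c"
    and sym: "\<And>a b. \<Phi> a b = \<Phi> b a"
    and cot: "\<And>a b c. cot a b c = \<kappa> * (\<Sum>d\<in>UNIV. (\<Sum>b'\<in>UNIV. E b c b' * M b' d) * \<Phi> a d)"
    and inv: "\<And>b e. (\<Sum>d\<in>UNIV. M b d * G d e) = (if b = e then 1 else 0)"
    and null: "(\<Sum>a\<in>UNIV. \<Sum>b\<in>UNIV. G a b * k a * k b) = 0"
    and knz: "k i0 \<noteq> 0"
  defines "u \<equiv> \<lambda>a. \<Sum>b\<in>UNIV. G a b * k b"
  shows
   "(\<forall>a b. (1/2) * (u a * (\<Sum>d\<in>UNIV. \<Phi> b d * k d) - u b * (\<Sum>d\<in>UNIV. \<Phi> a d * k d)) = 0)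
      \<Longrightarrow> (\<Sum>a\<in>UNIV. \<Sum>b\<in>UNIV. k a * k b * cot a b c) = 0"
   "(\<forall>a. (\<Sum>b\<in>UNIV. \<Phi> a b * k b) = 0) \<Longrightarrow> (\<Sum>a\<in>UNIV. k a * cot a b c) = 0"
   "(\<forall>a b c. (1/2) * (u a * \<Phi> b c - u b * \<Phi> a c) = 0) \<Longrightarrow> (\<Sum>c\<in>UNIV. k c * cot a b c) = 0"
   "(\<forall>a b c. (1/2) * (u a * \<Phi> b c - u b * \<Phi> a c) = 0) \<Longrightarrow> (\<Sum>a\<in>UNIV. k a * cot a b c) = 0"
proof -
  define N where "N = (\<lambda>b c d. \<Sum>b'\<in>UNIV. E b c b' * M b' d)"
  define v where "v = (\<lambda>d. \<Sum>a\<in>UNIV. \<Phi> d a * k a)"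
  have S1: "(\<Sum>a\<in>UNIV. k a * cot a b c) = \<kappa> * (\<Sum>d\<in>UNIV. N b c d * v d)" for b c
    unfolding cot N_def v_def by (simp add: sum_3 sym algebra_simps)
  have S2: "(\<Sum>d\<in>UNIV. N b c d * u d) = (\<Sum>b'\<in>UNIV. E b c b' * k b')" for b c
    unfolding N_def u_def by (rule inv_apply[OF inv])
  have E13: "E b' c b = - E b c b'" for b c b'
    using h1[of c b' b] h2[of c b b'] h1[of b c b'] by simp
  have S3: "(\<Sum>b\<in>UNIV. k b * (\<Sum>b'\<in>UNIV. E b c b' * k b')) = 0" for c
    by (rule antisym_sum) (rule E13)
  have S3': "(\<Sum>c\<in>UNIV. k c * (\<Sum>b'\<in>UNIV. E b c b' * k b')) = 0" for b
    by (rule antisym_sum) (rule h2)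
  have Mu: "(\<Sum>d\<in>UNIV. M b d * u d) = k b" for b
  proof -
    have "(\<Sum>d\<in>UNIV. M b d * u d) = (\<Sum>e\<in>UNIV. (\<Sum>d\<in>UNIV. M b d * G d e) * k e)"
      unfolding u_def by (simp add: sum_3 algebra_simps)
    also have "\<dots> = (\<Sum>e\<in>UNIV. if b = e then k e else 0)"
      by (intro sum.cong refl) (simp add: inv)
    finally show ?thesis by simp
  qed
  obtain i where ui: "u i \<noteq> 0"
  proof (rule ccontr)
    assume "\<not> thesis"
    with that have "\<forall>i. u i = 0" by blast
    hence "k i0 = 0" using Mu[of i0] by simp
    thus False using knz by simp
  qed
  have ku: "(\<Sum>a\<in>UNIV. k a * u a) = 0"
    using null unfolding u_def by (simp add: sum_distrib_left algebra_simps)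
  show "(\<Sum>a\<in>UNIV. \<Sum>b\<in>UNIV. k a * k b * cot a b c) = 0"
    if H: "\<forall>a b. (1/2) * (u a * (\<Sum>d\<in>UNIV. \<Phi> b d * k d) - u b * (\<Sum>d\<in>UNIV. \<Phi> a d * k d)) = 0"
  proof -
    define lam where "lam = v i / u i"
    have vl: "v d = lam * u d" for d
    proof -
      have "u i * v d = u d * v i" using H[rule_format, of i d] unfolding v_def by simp
      thus ?thesis unfolding lam_def using ui by (simp add: field_simps)
    qed
    have "(\<Sum>a\<in>UNIV. \<Sum>b\<in>UNIV. k a * k b * cot a b c) = (\<Sum>b\<in>UNIV. k b * (\<Sum>a\<in>UNIV. k a * cot a b c))"
      by (subst sum.swap) (simp add: sum_distrib_left algebra_simps)
    also have "\<dots> = (\<Sum>b\<in>UNIV. k b * (\<kappa> * lam * (\<Sum>d\<in>UNIV. N b c d * u d)))"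
      by (simp add: S1 vl sum_distrib_left algebra_simps)
    also have "\<dots> = \<kappa> * lam * (\<Sum>b\<in>UNIV. k b * (\<Sum>b'\<in>UNIV. E b c b' * k b'))"
      unfolding S2 by (simp add: sum_distrib_left algebra_simps)
    also have "\<dots> = 0" by (simp add: S3)
    finally show ?thesis .
  qed
  show "(\<Sum>a\<in>UNIV. k a * cot a b c) = 0" if H: "\<forall>a. (\<Sum>b\<in>UNIV. \<Phi> a b * k b) = 0"
    using H unfolding S1 v_def by simp
  assume H: "\<forall>a b c. (1/2) * (u a * \<Phi> b c - u b * \<Phi> a c) = 0"
  define \<mu> where "\<mu> = \<Phi> i i / (u i * u i)"
  have P1: "\<Phi> b c = u b * \<Phi> i c / u i" for b c
  proof -
    have "u i * \<Phi> b c = u b * \<Phi> i c" using H[rule_format, of i b c] by simp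
    thus ?thesis using ui by (simp add: field_simps)
  qed
  have Pm: "\<Phi> b c = \<mu> * u b * u c" for b c
    using P1[of b c] P1[of c i] sym[of i c] ui unfolding \<mu>_def by (simp add: field_simps)
  have v0: "v d = 0" for d
  proof -
    have "v d = \<mu> * u d * (\<Sum>a\<in>UNIV. k a * u a)"
      unfolding v_def Pm by (simp add: sum_distrib_left algebra_simps)
    thus ?thesis using ku by simp
  qed
  show "(\<Sum>a\<in>UNIV. k a * cot a b c) = 0" unfolding S1 v0 by simp
  have "(\<Sum>c\<in>UNIV. k c * cot a b c) = \<kappa> * \<mu> * u a * (\<Sum>c\<in>UNIV. k c * (\<Sum>d\<in>UNIV. N b c d * u d))"
    unfolding cot N_def Pm by (simp add: sum_distrib_left sum_distrib_right algebra_simps)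
  also have "\<dots> = 0" by (simp add: S2 S3')
  finally show "(\<Sum>c\<in>UNIV. k c * cot a b c) = 0" .
qed




lemma main_point:
  fixes U :: "(real^3) set" and g :: metric and e :: "real^3 \<Rightarrow> 3 \<Rightarrow> 3 \<Rightarrow> 3 \<Rightarrow> real"
    and k :: "real^3 \<Rightarrow> complex^3" and m :: real
  assumes metric: "riem_or_lor_metric U g"
    and orient: "orientation U g e"
    and m_nz: "m \<noteq> 0"
    and tmg: "\<forall>x\<in>U. \<forall>a b. phi g a b x = (1/m) * hodge_cotton g e a b x"
    and nullk: "null_generator U g k"
    and xU: "x \<in> U"
  shows
   "(\<forall>a b. (1/2) * (lower g k a x * (\<Sum>d\<in>UNIV. of_real (phi g b d x) * k x $ d)
                              - lower g k b x * (\<Sum>d\<in>UNIV. of_real (phi g a d x) * k x $ d)) = 0)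
     \<Longrightarrow> (\<Sum>a\<in>UNIV. \<Sum>b\<in>UNIV. k x $ a * k x $ b * of_real (cotton g a b c x)) = 0"
   "(\<forall>a. (\<Sum>b\<in>UNIV. of_real (phi g a b x) * k x $ b) = 0)
     \<Longrightarrow> (\<Sum>a\<in>UNIV. k x $ a * of_real (cotton g a b c x)) = 0"
   "(\<forall>a b c. (1/2) * (lower g k a x * of_real (phi g b c x) - lower g k b x * of_real (phi g a c x)) = 0)
     \<Longrightarrow> (\<Sum>c\<in>UNIV. k x $ c * of_real (cotton g a b c x)) = 0"
   "(\<forall>a b c. (1/2) * (lower g k a x * of_real (phi g b c x) - lower g k b x * of_real (phi g a c x)) = 0)
     \<Longrightarrow> (\<Sum>a\<in>UNIV. k x $ a * of_real (cotton g a b c x)) = 0"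
proof -
  have eskew: "\<And>a b c. e x b a c = - e x a b c" "\<And>a b c. e x a c b = - e x a b c"
    using orient xU unfolding orientation_def by blast+
  have enorm: "(\<Sum>a\<in>UNIV. \<Sum>b\<in>UNIV. \<Sum>c\<in>UNIV. \<Sum>a'\<in>UNIV. \<Sum>b'\<in>UNIV. \<Sum>c'\<in>UNIV.
            ginv g x a a' * ginv g x b b' * ginv g x c c' * e x a b c * e x a' b' c')
          = (-1) ^ neg_eigs (g x) * 6"
    using orient xU unfolding orientation_def by blast
  define s where "s = (e x 1 2 3)^2 * detf (\<lambda>a b. ginv g x a b)"
  have "s * 6 = (-1) ^ neg_eigs (g x) * 6"
    using norm_alg[of "e x" "\<lambda>a b. ginv g x a b", OF eskew] enorm unfolding s_def by simp
  hence snz: "s \<noteq> 0" by auto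
  have cot_real: "cotton g a b c x = (m / s) * (\<Sum>d\<in>UNIV. (\<Sum>b'\<in>UNIV. e x b c b' * ginv g x b' d) * phi g a d x)"
    for a b c
  proof -
    have Cs: "\<And>c d. cotton g a d c x = - cotton g a c d x" by (simp add: cotton_def)
    have H: "hodge_cotton g e a d x = m * phi g a d x" for d
      using tmg xU m_nz by simp
    have "s * cotton g a b c x = (\<Sum>d\<in>UNIV. (\<Sum>b'\<in>UNIV. e x b c b' * ginv g x b' d) * hodge_cotton g e a d x)"
      using hodge_inv_alg[of "e x" "\<lambda>c d. cotton g a c d x" b c "\<lambda>a b. ginv g x a b", OF eskew Cs]
      unfolding s_def hodge_cotton_def by simp
    also have "\<dots> = m * (\<Sum>d\<in>UNIV. (\<Sum>b'\<in>UNIV. e x b c b' * ginv g x b' d) * phi g a d x)"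
      unfolding H by (simp add: sum_distrib_left algebra_simps)
    finally show ?thesis using snz by (simp add: field_simps)
  qed
  have cotc: "complex_of_real (cotton g a b c x) = complex_of_real (m / s) *
     (\<Sum>d\<in>UNIV. (\<Sum>b'\<in>UNIV. complex_of_real (e x b c b') * complex_of_real (ginv g x b' d)) * complex_of_real (phi g a d x))" for a b c
    unfolding cot_real by simp
  have inv: "(\<Sum>d\<in>UNIV. complex_of_real (ginv g x b d) * complex_of_real (g x $ d $ e')) = (if b = e' then 1 else 0)" for b e'
  proof -
    have "(\<Sum>d\<in>UNIV. complex_of_real (ginv g x b d) * complex_of_real (g x $ d $ e'))
       = complex_of_real (\<Sum>d\<in>UNIV. ginv g x b d * g x $ d $ e')" by simp
    thus ?thesis using ginv_left[OF metric xU] by simp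
  qed
  have null: "(\<Sum>a\<in>UNIV. \<Sum>b\<in>UNIV. complex_of_real (g x $ a $ b) * k x $ a * k x $ b) = 0"
    using nullk xU unfolding null_generator_def gC_def by blast
  have "k x \<noteq> 0" using nullk xU unfolding null_generator_def by blast
  then obtain i0 where knz: "k x $ i0 \<noteq> 0" by (metis vec_eq_iff zero_index)
  have sym: "complex_of_real (phi g a b x) = complex_of_real (phi g b a x)" for a b
  proof -
    have "phi g a b x = phi g b a x"
      unfolding phi_def using ric_sym[OF metric xU, of a b] met_sym[OF metric xU, of a b] by simp
    thus ?thesis by simp
  qed
  have E1: "complex_of_real (e x b a c) = - complex_of_real (e x a b c)" for a b c using eskew(1)[of a b c] by simp
  have E2: "complex_of_real (e x a c b) = - complex_of_real (e x a b c)" for a b c using eskew(2)[of a b c] by simp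
  have lw: "lower g k a x = (\<Sum>b\<in>UNIV. complex_of_real (g x $ a $ b) * k x $ b)" for a
    unfolding lower_def gC_def by simp
  note F = final_alg[of "\<lambda>a b c. complex_of_real (e x a b c)" "\<lambda>a b. complex_of_real (phi g a b x)"
     "\<lambda>a b c. complex_of_real (cotton g a b c x)" "complex_of_real (m / s)" "\<lambda>a b. complex_of_real (ginv g x a b)"
     "\<lambda>a b. complex_of_real (g x $ a $ b)" "\<lambda>a. k x $ a" i0, OF E1 E2 sym cotc inv null knz]
  show "(\<forall>a b. (1/2) * (lower g k a x * (\<Sum>d\<in>UNIV. of_real (phi g b d x) * k x $ d)
                              - lower g k b x * (\<Sum>d\<in>UNIV. of_real (phi g a d x) * k x $ d)) = 0)
     \<Longrightarrow> (\<Sum>a\<in>UNIV. \<Sum>b\<in>UNIV. k x $ a * k x $ b * of_real (cotton g a b c x)) = 0"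
    using F(1) unfolding lw by simp
  show "(\<forall>a. (\<Sum>b\<in>UNIV. of_real (phi g a b x) * k x $ b) = 0)
     \<Longrightarrow> (\<Sum>a\<in>UNIV. k x $ a * of_real (cotton g a b c x)) = 0"
    using F(2) by simp
  show "(\<forall>a b c. (1/2) * (lower g k a x * of_real (phi g b c x) - lower g k b x * of_real (phi g a c x)) = 0)
     \<Longrightarrow> (\<Sum>c\<in>UNIV. k x $ c * of_real (cotton g a b c x)) = 0"
    using F(3) unfolding lw by simp
  show "(\<forall>a b c. (1/2) * (lower g k a x * of_real (phi g b c x) - lower g k b x * of_real (phi g a c x)) = 0)
     \<Longrightarrow> (\<Sum>a\<in>UNIV. k x $ a * of_real (cotton g a b c x)) = 0"
    using F(4) unfolding lw by simp
qed


theorem mainTheorem10: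
  fixes U :: "(real^3) set" and g :: metric and e :: "real^3 \<Rightarrow> 3 \<Rightarrow> 3 \<Rightarrow> 3 \<Rightarrow> real"
    and k :: "real^3 \<Rightarrow> complex^3" and m \<Lambda> :: real
  assumes metric: "riem_or_lor_metric U g"
    and orient: "orientation U g e"
    and m_nz: "m \<noteq> 0"
    and tmg: "\<forall>x\<in>U. \<forall>a b. phi g a b x = (1/m) * hodge_cotton g e a b x"
    and scal_const: "\<forall>x\<in>U. scal g x = 6 * \<Lambda>"
    and nullk: "null_generator U g k"
  shows
   "((\<forall>x\<in>U. \<forall>a b. (1/2) * (lower g k a x * (\<Sum>d\<in>UNIV. of_real (phi g b d x) * k x $ d)
                              - lower g k b x * (\<Sum>d\<in>UNIV. of_real (phi g a d x) * k x $ d)) = 0)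
      \<longrightarrow> (\<forall>x\<in>U. \<forall>c. (\<Sum>a\<in>UNIV. \<Sum>b\<in>UNIV. k x $ a * k x $ b *
              of_real (cotton g a b c x + 3 * g x $ b $ c * pd (schS g) a x)) = 0))
  \<and> ((\<forall>x\<in>U. \<forall>a. (\<Sum>b\<in>UNIV. of_real (phi g a b x) * k x $ b) = 0)
      \<longrightarrow> (\<forall>x\<in>U. (\<forall>b c. (\<Sum>a\<in>UNIV. k x $ a *
                 of_real (cotton g a b c x - (g x $ a $ b * pd (schS g) c x - g x $ a $ c * pd (schS g) b x))) = 0)
             \<and> (\<forall>c. (\<Sum>a\<in>UNIV. \<Sum>b\<in>UNIV. k x $ a * k x $ b * of_real (cotton g a b c x)) = 0)
             \<and> (\<Sum>a\<in>UNIV. k x $ a * of_real (pd (schS g) a x)) = 0))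
  \<and> ((\<forall>x\<in>U. \<forall>a b c. (1/2) * (lower g k a x * of_real (phi g b c x)
                              - lower g k b x * of_real (phi g a c x)) = 0)
      \<longrightarrow> (\<forall>x\<in>U. (\<forall>a b. (\<Sum>c\<in>UNIV. k x $ c *
                 of_real (cotton g a b c x - g x $ c $ a * pd (schS g) b x)) = 0)
             \<and> (\<forall>b c. (\<Sum>a\<in>UNIV. k x $ a * of_real (cotton g a b c x)) = 0)
             \<and> (\<forall>a b. (1/2) * (lower g k a x * of_real (pd (schS g) b x)
                              - lower g k b x * of_real (pd (schS g) a x)) = 0)))"
proof -
  have opn: "open U" by (rule met_open[OF metric])
  have dS: "pd (schS g) a x = 0" if "x \<in> U" for a x
  proof -
    have "pd (schS g) a x = pd (\<lambda>y. 6 * \<Lambda> / 12) a x"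
      by (rule pd_cong[OF opn that]) (simp add: schS_def scal_const)
    thus ?thesis by (simp add: pd_const)
  qed
  note P = main_point[OF metric orient m_nz tmg nullk]
  have G1: "(\<forall>x\<in>U. \<forall>a b. (1/2) * (lower g k a x * (\<Sum>d\<in>UNIV. of_real (phi g b d x) * k x $ d)
                              - lower g k b x * (\<Sum>d\<in>UNIV. of_real (phi g a d x) * k x $ d)) = 0)
      \<longrightarrow> (\<forall>x\<in>U. \<forall>c. (\<Sum>a\<in>UNIV. \<Sum>b\<in>UNIV. k x $ a * k x $ b *
              of_real (cotton g a b c x + 3 * g x $ b $ c * pd (schS g) a x)) = 0)"
  proof (intro impI ballI allI)
    fix x c assume H: "\<forall>x\<in>U. \<forall>a b. (1/2) * (lower g k a x * (\<Sum>d\<in>UNIV. of_real (phi g b d x) * k x $ d)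
                              - lower g k b x * (\<Sum>d\<in>UNIV. of_real (phi g a d x) * k x $ d)) = 0"
      and xU: "x \<in> U"
    have "(\<Sum>a\<in>UNIV. \<Sum>b\<in>UNIV. k x $ a * k x $ b * of_real (cotton g a b c x)) = 0"
      using P(1)[OF xU] H xU by blast
    thus "(\<Sum>a\<in>UNIV. \<Sum>b\<in>UNIV. k x $ a * k x $ b *
              of_real (cotton g a b c x + 3 * g x $ b $ c * pd (schS g) a x)) = 0"
      using dS[OF xU] by simp
  qed
  have G2: "(\<forall>x\<in>U. \<forall>a. (\<Sum>b\<in>UNIV. of_real (phi g a b x) * k x $ b) = 0)
      \<longrightarrow> (\<forall>x\<in>U. (\<forall>b c. (\<Sum>a\<in>UNIV. k x $ a *
                 of_real (cotton g a b c x - (g x $ a $ b * pd (schS g) c x - g x $ a $ c * pd (schS g) b x))) = 0)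
             \<and> (\<forall>c. (\<Sum>a\<in>UNIV. \<Sum>b\<in>UNIV. k x $ a * k x $ b * of_real (cotton g a b c x)) = 0)
             \<and> (\<Sum>a\<in>UNIV. k x $ a * of_real (pd (schS g) a x)) = 0)"
  proof (intro impI ballI allI conjI)
    fix x assume H: "\<forall>x\<in>U. \<forall>a. (\<Sum>b\<in>UNIV. of_real (phi g a b x) * k x $ b) = 0" and xU: "x \<in> U"
    have A: "(\<Sum>a\<in>UNIV. k x $ a * of_real (cotton g a b c x)) = 0" for b c
      using P(2)[OF xU] H xU by blast
    show "(\<Sum>a\<in>UNIV. k x $ a *
                 of_real (cotton g a b c x - (g x $ a $ b * pd (schS g) c x - g x $ a $ c * pd (schS g) b x))) = 0" for b c
      using A[of b c] dS[OF xU] by simp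
    show "(\<Sum>a\<in>UNIV. \<Sum>b\<in>UNIV. k x $ a * k x $ b * of_real (cotton g a b c x)) = 0" for c
    proof -
      have "(\<Sum>a\<in>UNIV. \<Sum>b\<in>UNIV. k x $ a * k x $ b * of_real (cotton g a b c x))
         = (\<Sum>b\<in>UNIV. k x $ b * (\<Sum>a\<in>UNIV. k x $ a * of_real (cotton g a b c x)))"
        by (subst sum.swap) (simp add: sum_distrib_left algebra_simps)
      thus ?thesis using A by simp
    qed
    show "(\<Sum>a\<in>UNIV. k x $ a * of_real (pd (schS g) a x)) = 0" using dS[OF xU] by simp
  qed
  have G3: "(\<forall>x\<in>U. \<forall>a b c. (1/2) * (lower g k a x * of_real (phi g b c x)
                              - lower g k b x * of_real (phi g a c x)) = 0)
      \<longrightarrow> (\<forall>x\<in>U. (\<forall>a b. (\<Sum>c\<in>UNIV. k x $ c *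
                 of_real (cotton g a b c x - g x $ c $ a * pd (schS g) b x)) = 0)
             \<and> (\<forall>b c. (\<Sum>a\<in>UNIV. k x $ a * of_real (cotton g a b c x)) = 0)
             \<and> (\<forall>a b. (1/2) * (lower g k a x * of_real (pd (schS g) b x)
                              - lower g k b x * of_real (pd (schS g) a x)) = 0))"
  proof (intro impI ballI allI conjI)
    fix x assume H: "\<forall>x\<in>U. \<forall>a b c. (1/2) * (lower g k a x * of_real (phi g b c x)
                              - lower g k b x * of_real (phi g a c x)) = 0" and xU: "x \<in> U"
    have H': "\<forall>a b c. (1/2) * (lower g k a x * of_real (phi g b c x)
                              - lower g k b x * of_real (phi g a c x)) = 0" using H xU by blast
    show "(\<Sum>c\<in>UNIV. k x $ c * of_real (cotton g a b c x - g x $ c $ a * pd (schS g) b x)) = 0" for a b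
      using P(3)[OF xU H', of a b] dS[OF xU] by simp
    show "(\<Sum>a\<in>UNIV. k x $ a * of_real (cotton g a b c x)) = 0" for b c
      using P(4)[OF xU H'] by simp
    show "(1/2) * (lower g k a x * of_real (pd (schS g) b x)
                              - lower g k b x * of_real (pd (schS g) a x)) = 0" for a b
      using dS[OF xU] by simp
  qed
  show ?thesis using G1 G2 G3 by blast
qed


end
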